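(* Let $a,\delta>0$, $n\in\mathbb{N}$, and let $J$ be an isometry-invariant kernel on $\mathbb{H}^1_L$ such that $J(L^j)\ge(a+\delta)L\log(j)L^{-2j}$ for every $j\ge n$. Then for all $k\in\mathbb{N}$ with $(a+\delta)(1-L^{-k})\ge a$ and all subsets $A\subset\Lambda_{n,n+k}$ with $|A|=\gamma L^k$, \[\mathbb{P}_J\big(A\nsim\Lambda_{n,n+2k}\setminus\Lambda_{n,n+k}\big)\le n^{-\gamma a}.\]
   Context: $\mathbb{H}^1_L$ ($L\ge2$ an integer) is the group $\bigoplus_{i=1}^\infty\mathbb{Z}/L\mathbb{Z}$ with ultrametric $\|x-y\|=L^{\max\{i:x_i\neq y_i\}}$ for $x\neq y$; $\Lambda_n(x)$ is the ball of radius $L^n$ around $x$ (an $n$-block). An isometry-invariant kernel assigns to each edge $\{x,y\}$ a weight depending only on $\|x-y\|$, written $J(L^j)$ for edges of length $L^j$. $\mathbb{P}_J$: each edge open independently with probability $1-\exp(-J(e))$. For $n\le m$, $\Lambda_{n,m}$ is the set of $n$-blocks contained in $\Lambda_m(0)$. For sets $A,B$ of $n$-blocks, $A\nsim B$ is the event that there is no open edge with one endpoint in a block of $A$ and the other in a block of $B$. *)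

theory Defs
  imports "HOL-Probability.Probability"
begin

text \<open>Points of the hierarchical group H^1_L: finitely supported sequences
  (x_1, x_2, ...) with x_i in {0..L-1}; we use functions nat => nat with the
  dummy coordinate 0 fixed to 0 (coordinates are indexed from 1).
  Group structure is irrelevant for the statement; only the ultrametric matters.\<close>
definition HL :: "nat \<Rightarrow> (nat \<Rightarrow> nat) set" where
  "HL L = {x. x 0 = 0 \<and> (\<forall>i. x i < L) \<and> finite {i. x i \<noteq> 0}}"

definition hzero :: "nat \<Rightarrow> nat" where
  "hzero = (\<lambda>_. 0)"

definition hdist :: "nat \<Rightarrow> (nat \<Rightarrow> nat) \<Rightarrow> (nat \<Rightarrow> nat) \<Rightarrow> real" where
  "hdist L x y = (if x = y then 0 else real L ^ Max {i. x i \<noteq> y i})"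

definition block :: "nat \<Rightarrow> nat \<Rightarrow> (nat \<Rightarrow> nat) \<Rightarrow> (nat \<Rightarrow> nat) set" where
  "block L n x = {y \<in> HL L. hdist L x y \<le> real L ^ n}"

text \<open>Lambda_{n,m}: the set of n-blocks contained in Lambda_m(0).\<close>
definition blocks :: "nat \<Rightarrow> nat \<Rightarrow> nat \<Rightarrow> (nat \<Rightarrow> nat) set set" where
  "blocks L n m = {b. (\<exists>x \<in> HL L. b = block L n x) \<and> b \<subseteq> block L m hzero}"

definition edges :: "nat \<Rightarrow> (nat \<Rightarrow> nat) set set" where
  "edges L = {{x, y} | x y. x \<in> HL L \<and> y \<in> HL L \<and> x \<noteq> y}"

definition edge_len :: "nat \<Rightarrow> (nat \<Rightarrow> nat) set \<Rightarrow> real" where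
  "edge_len L e = (THE d. \<forall>x\<in>e. \<forall>y\<in>e. x \<noteq> y \<longrightarrow> hdist L x y = d)"

text \<open>Percolation measure P_J for an isometry-invariant kernel J (a function of the
  edge length): each edge e is open independently with probability 1 - exp(-J(e)).\<close>
definition perc :: "nat \<Rightarrow> (real \<Rightarrow> real) \<Rightarrow> ((nat \<Rightarrow> nat) set \<Rightarrow> bool) measure" where
  "perc L J = (\<Pi>\<^sub>M e \<in> edges L. measure_pmf (bernoulli_pmf (1 - exp (- J (edge_len L e)))))"

definition not_conn ::
  "nat \<Rightarrow> (real \<Rightarrow> real) \<Rightarrow> (nat \<Rightarrow> nat) set set \<Rightarrow> (nat \<Rightarrow> nat) set set
     \<Rightarrow> ((nat \<Rightarrow> nat) set \<Rightarrow> bool) set" where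
  "not_conn L J A B = {\<omega> \<in> space (perc L J).
     \<forall>b1\<in>A. \<forall>b2\<in>B. \<forall>x\<in>b1. \<forall>y\<in>b2. x \<noteq> y \<longrightarrow> \<not> \<omega> {x, y}}"

end

theory Submission
  imports Defs
begin


definition Zs :: "nat \<Rightarrow> nat \<Rightarrow> (nat \<Rightarrow> nat) set" where
  "Zs L m = {y \<in> HL L. \<forall>i>m. y i = 0}"

lemma HL_fin: "x \<in> HL L \<Longrightarrow> finite {i. x i \<noteq> 0}"
  by (simp add: HL_def)

lemma hdist_le_iff:
  assumes L: "L \<ge> 2" and x: "x \<in> HL L" and y: "y \<in> HL L"
  shows "hdist L x y \<le> real L ^ m \<longleftrightarrow> (\<forall>i>m. x i = y i)"
proof (cases "x = y")
  case True then show ?thesis by (simp add: hdist_def)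
next
  case False
  let ?S = "{i. x i \<noteq> y i}"
  have fin: "finite ?S"
    by (rule finite_subset[of _ "{i. x i \<noteq> 0} \<union> {i. y i \<noteq> 0}"]) (use HL_fin[OF x] HL_fin[OF y] in auto)
  have ne: "?S \<noteq> {}" using False by auto
  have "hdist L x y \<le> real L ^ m \<longleftrightarrow> Max ?S \<le> m"
    using False L by (simp add: hdist_def power_increasing_iff)
  also have "\<dots> \<longleftrightarrow> (\<forall>i\<in>?S. i \<le> m)" using fin ne by simp
  also have "\<dots> \<longleftrightarrow> (\<forall>i>m. x i = y i)" using not_le by blast
  finally show ?thesis .
qed

lemma hdist_sym: "hdist L x y = hdist L y x"
  unfolding hdist_def by (auto simp: eq_commute)

lemma edge_len_eq: "x \<noteq> y \<Longrightarrow> edge_len L {x, y} = hdist L x y"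
  unfolding edge_len_def
  by (rule the_equality) (auto simp: hdist_sym)

lemma hdist_eq_top:
  assumes x: "x \<in> Zs L m" and y: "y \<in> Zs L j - Zs L (j - 1)" and mj: "m < j"
  shows "hdist L x y = real L ^ j"
proof -
  have yH: "y \<in> HL L" and yj: "\<forall>i>j. y i = 0" using y by (auto simp: Zs_def)
  then obtain i where i: "i > j - 1" "y i \<noteq> 0" using y by (auto simp: Zs_def)
  have ij: "i = j" using i yj by (metis le_antisym leI less_imp_diff_less not_less_eq diff_Suc_1 Suc_pred' less_nat_zero_code less_imp_le_nat mj Suc_leI)
  have xz: "\<forall>i>m. x i = 0" using x by (auto simp: Zs_def)
  have jS: "j \<in> {i. x i \<noteq> y i}" using i ij xz mj by auto
  have "Max {i. x i \<noteq> y i} = j"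
  proof (rule Max_eqI)
    show "finite {i. x i \<noteq> y i}"
      by (rule finite_subset[of _ "{..j}"]) (use xz yj mj in \<open>auto simp: not_le intro: ccontr\<close>)
    show "j \<in> {i. x i \<noteq> y i}" by (rule jS)
    fix i assume "i \<in> {i. x i \<noteq> y i}"
    then show "i \<le> j" using xz yj mj by (metis (mono_tags) mem_Collect_eq not_le order.strict_trans)
  qed
  moreover have "x \<noteq> y" using jS by auto
  ultimately show ?thesis by (simp add: hdist_def)
qed

lemma Zs_mono: "m \<le> m' \<Longrightarrow> Zs L m \<subseteq> Zs L m'"
  by (auto simp: Zs_def)

lemma hzero_HL: "L \<ge> 2 \<Longrightarrow> hzero \<in> HL L"
  unfolding Defs.HL_def hzero_def by auto

lemma block_char: "L \<ge> 2 \<Longrightarrow> x \<in> HL L \<Longrightarrow> block L n x = {y \<in> HL L. \<forall>i>n. x i = y i}"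
  unfolding block_def using hdist_le_iff by blast

lemma block_zero: "L \<ge> 2 \<Longrightarrow> block L m hzero = Zs L m"
  by (subst block_char[OF _ hzero_HL]) (auto simp: Zs_def hzero_def)

lemma card_Zs: assumes L: "L \<ge> 2" shows "card (Zs L m) = L ^ m" "finite (Zs L m)"
proof -
  let ?P = "PiE {1..m} (\<lambda>_. {..<L})"
  let ?f = "\<lambda>y. restrict y {1..m}"
  let ?g = "\<lambda>h i. if i \<in> {1..m} then h i else (0::nat)"
  have bij: "bij_betw ?f (Zs L m) ?P"
  proof (rule bij_betw_byWitness[where f' = ?g])
    show "\<forall>a\<in>Zs L m. ?g (?f a) = a"
      by (auto simp: Zs_def HL_def fun_eq_iff not_le)
    show "\<forall>a'\<in>?P. ?f (?g a') = a'" by (auto simp: PiE_def extensional_def fun_eq_iff)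
    show "?f ` Zs L m \<subseteq> ?P" by (auto simp: Zs_def HL_def)
    show "?g ` ?P \<subseteq> Zs L m"
    proof
      fix z assume "z \<in> ?g ` ?P"
      then obtain h where h: "h \<in> ?P" "z = ?g h" by blast
      have "finite {i. z i \<noteq> 0}" by (rule finite_subset[of _ "{1..m}"]) (auto simp: h)
      moreover have "z i < L" for i using h L by (auto simp: PiE_def Pi_def)
      ultimately show "z \<in> Zs L m" by (auto simp: Zs_def HL_def h)
    qed
  qed
  have "card ?P = L ^ m" by (simp add: card_PiE)
  then show "card (Zs L m) = L ^ m" using bij_betw_same_card[OF bij] by simp
  show "finite (Zs L m)" using bij_betw_finite[OF bij] by (simp add: finite_PiE)
qed

lemma card_block: assumes L: "L \<ge> 2" and x: "x \<in> HL L"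
  shows "card (block L n x) = L ^ n" "finite (block L n x)"
proof -
  let ?f = "\<lambda>y i. if i \<le> n then y i else x i"
  let ?g = "\<lambda>b i. if i \<le> n then b i else (0::nat)"
  have bij: "bij_betw ?f (Zs L n) (block L n x)"
  proof (rule bij_betw_byWitness[where f' = ?g])
    show "\<forall>a\<in>Zs L n. ?g (?f a) = a" by (auto simp: Zs_def fun_eq_iff)
    show "\<forall>a'\<in>block L n x. ?f (?g a') = a'" using block_char[OF L x] by (auto simp: fun_eq_iff)
    show "?f ` Zs L n \<subseteq> block L n x"
    proof
      fix z assume "z \<in> ?f ` Zs L n"
      then obtain y where y: "y \<in> Zs L n" "z = ?f y" by blast
      have "finite {i. z i \<noteq> 0}"
        by (rule finite_subset[of _ "{i. y i \<noteq> 0} \<union> {i. x i \<noteq> 0}"]) (use y x in \<open>auto simp: Zs_def HL_def\<close>)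
      moreover have "z i < L" for i using y x by (auto simp: Zs_def HL_def)
      moreover have "z 0 = 0" using y x by (auto simp: Zs_def HL_def)
      ultimately show "z \<in> block L n x" using block_char[OF L x] y by (auto simp: HL_def)
    qed
    show "?g ` block L n x \<subseteq> Zs L n"
    proof
      fix z assume "z \<in> ?g ` block L n x"
      then obtain b where b: "b \<in> block L n x" "z = ?g b" by blast
      have bH: "b \<in> HL L" using b block_char[OF L x] by auto
      have "finite {i. z i \<noteq> 0}" by (rule finite_subset[of _ "{i. b i \<noteq> 0}"]) (use bH in \<open>auto simp: b HL_def\<close>)
      then show "z \<in> Zs L n" using bH L by (auto simp: Zs_def HL_def b)
    qed
  qed
  show "card (block L n x) = L ^ n" using bij_betw_same_card[OF bij] card_Zs[OF L] by simp
  show "finite (block L n x)" using bij_betw_finite[OF bij] card_Zs[OF L] by simp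
qed

lemma geo_sum: assumes L: "(L::real) > 1"
  shows "(\<Sum>j\<in>{m<..m+k}. (L - 1) / L ^ j) = 1 / L ^ m - 1 / L ^ (m + k)"
proof (induction k)
  case 0 then show ?case by simp
next
  case (Suc k)
  have "{m<..m + Suc k} = insert (m + Suc k) {m<..m+k}" by auto
  then have "(\<Sum>j\<in>{m<..m+Suc k}. (L - 1) / L ^ j) = (L - 1) / L ^ (m + Suc k) + (\<Sum>j\<in>{m<..m+k}. (L - 1) / L ^ j)"
    by simp
  also have "\<dots> = (L - 1) / L ^ (m + Suc k) + (1 / L ^ m - 1 / L ^ (m + k))"
    by (simp only: Suc.IH)
  also have "\<dots> = 1 / L ^ m - 1 / L ^ (m + Suc k)" using L
    by (simp add: field_simps)
  finally show ?case .
qed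

lemma ident: assumes "(x::real) > 0" shows "(x^(Suc i) - x^i) * x * x powr (-2*real (Suc i)) = (x-1)/x^(Suc i)"
proof -
  have e: "-2*real (Suc i) = - real (2 * Suc i)" by simp
  have q: "x ^ (2 * Suc i) = x ^ Suc i * x ^ Suc i" by (simp only: mult_2 power_add)
  have p: "x powr (-2*real (Suc i)) = 1 / (x ^ Suc i * x ^ Suc i)"
    unfolding e powr_minus powr_realpow[OF assms] q by (simp add: divide_inverse)
  have xi: "x ^ i > 0" using assms by simp
  show ?thesis unfolding p using assms xi by (simp add: field_simps)
qed



theorem lemma5p5:
  fixes L n k :: nat and a \<delta> \<gamma> :: real and J :: "real \<Rightarrow> real"
    and A :: "(nat \<Rightarrow> nat) set set"
  assumes L: "L \<ge> 2"
    and a: "a > 0" and \<delta>: "\<delta> > 0"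
    and n: "n \<ge> 1"
    and J_nonneg: "\<And>j. j \<ge> 1 \<Longrightarrow> J (real L ^ j) \<ge> 0"
    and J_lower: "\<And>j. j \<ge> n \<Longrightarrow>
        J (real L ^ j) \<ge> (a + \<delta>) * real L * ln (real j) * real L powr (- 2 * real j)"
    and k: "(a + \<delta>) * (1 - real L powr (- real k)) \<ge> a"
    and A: "A \<subseteq> blocks L n (n + k)"
    and card: "real (card A) = \<gamma> * real L ^ k"
  shows "measure (perc L J) (not_conn L J A (blocks L n (n + 2 * k) - blocks L n (n + k)))
           \<le> real n powr (- \<gamma> * a)"
proof -
  have L1: "real L > 1" using L by simp
  define Mf where "Mf = (\<lambda>e. measure_pmf (bernoulli_pmf (1 - exp (- J (edge_len L e)))))"
  have perc_eq: "perc L J = PiM (edges L) Mf" by (simp add: perc_def Mf_def)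
  interpret P: product_prob_space Mf "edges L"
    by (auto simp: product_prob_space_def product_sigma_finite_def product_prob_space_axioms_def
        Mf_def prob_space_measure_pmf prob_space_imp_sigma_finite)
  define UA where "UA = \<Union>A"
  define D where "D j = Zs L j - Zs L (j - 1)" for j
  define K where "K = {n+k<..n+k+k}"
  define UB where "UB = (\<Union>j\<in>K. D j)"
  define E where "E = (\<lambda>(x,y). {x,y}) ` (UA \<times> UB)"
  define B where "B = blocks L n (n + 2 * k) - blocks L n (n + k)"
  define P where "P = {\<omega> \<in> space (PiM (edges L) Mf). \<forall>e\<in>E. \<omega> e \<in> {False}}"
  have blocksZ: "b \<subseteq> Zs L m" if "b \<in> blocks L n m" for b m
    using that by (auto simp: blocks_def block_zero[OF L])
  have UA_Z: "UA \<subseteq> Zs L (n+k)"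
    using A blocksZ by (auto simp: UA_def)
  have D_Z: "D j \<inter> Zs L (n+k) = {}" if "j \<in> K" for j
  proof -
    have "n+k \<le> j - 1" using that by (auto simp: K_def)
    then show ?thesis using Zs_mono[of "n+k" "j - 1" L] by (auto simp: D_def)
  qed
  have UB_Z: "UB \<inter> Zs L (n+k) = {}" using D_Z by (auto simp: UB_def)
  have UB_Z2: "UB \<subseteq> Zs L (n+k+k)"
  proof
    fix y assume "y \<in> UB"
    then obtain j where j: "j \<in> K" "y \<in> D j" by (auto simp: UB_def)
    then have "Zs L j \<subseteq> Zs L (n+k+k)" by (intro Zs_mono) (simp add: K_def)
    then show "y \<in> Zs L (n+k+k)" using j by (auto simp: D_def)
  qed
  have ZH: "Zs L m \<subseteq> HL L" for m by (auto simp: Zs_def)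
  have finA: "finite A"
  proof (rule finite_subset)
    show "A \<subseteq> Pow (Zs L (n+k))" using A blocksZ by auto
  qed (simp add: card_Zs[OF L])
  have finUA: "finite UA" using UA_Z card_Zs[OF L] finite_subset by blast
  have finUB: "finite UB" using UB_Z2 card_Zs[OF L] finite_subset by blast
  have finE: "finite E" using finUA finUB by (simp add: E_def)
  have top: "hdist L x y = real L ^ j" "x \<noteq> y"
    if "x \<in> UA" "y \<in> D j" "j \<in> K" for x y j
  proof -
    show "hdist L x y = real L ^ j"
      by (rule hdist_eq_top[of x L "n+k"]) (use that UA_Z in \<open>auto simp: D_def K_def\<close>)
    show "x \<noteq> y" using that UA_Z D_Z by blast
  qed
  have E_sub: "E \<subseteq> edges L"
  proof
    fix e assume "e \<in> E"
    then obtain x y j where e: "e = {x,y}" "x \<in> UA" "y \<in> D j" "j \<in> K"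
      unfolding E_def UB_def by auto
    have "x \<in> HL L" using e UA_Z ZH by blast
    moreover have "y \<in> HL L" using e ZH by (auto simp: D_def)
    moreover have "x \<noteq> y" using top[OF e(2-4)] by simp
    ultimately show "e \<in> edges L" unfolding edges_def using e by blast
  qed
  have Jnn: "J (edge_len L e) \<ge> 0" if "e \<in> E" for e
  proof -
    obtain x y j where "e = {x,y}" "x \<in> UA" "y \<in> D j" "j \<in> K"
      using \<open>e \<in> E\<close> unfolding E_def UB_def by auto
    then show ?thesis using top[of x y j] J_nonneg[of j] by (simp add: edge_len_eq K_def)
  qed
  have sub: "not_conn L J A B \<subseteq> P"
  proof
    fix \<omega> assume w: "\<omega> \<in> not_conn L J A B"
    have "\<omega> e \<in> {False}" if "e \<in> E" for e
    proof -
      obtain x y j where e: "e = {x,y}" "x \<in> UA" "y \<in> D j" "j \<in> K"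
        using \<open>e \<in> E\<close> unfolding E_def UB_def by auto
      obtain b1 where b1: "b1 \<in> A" "x \<in> b1" using e by (auto simp: UA_def)
      have yH: "y \<in> HL L" using e ZH by (auto simp: D_def)
      have yb: "y \<in> block L n y" using block_char[OF L yH] yH by auto
      have "block L n y \<subseteq> block L (n + 2 * k) hzero"
      proof
        fix z assume "z \<in> block L n y"
        then have z: "z \<in> HL L" "\<forall>i>n. y i = z i" using block_char[OF L yH] by auto
        have "\<forall>i>j. y i = 0" using e by (auto simp: D_def Zs_def)
        then have "\<forall>i>n + 2*k. z i = 0" using z e by (auto simp: K_def)
        then show "z \<in> block L (n + 2 * k) hzero" using z by (simp add: block_zero[OF L] Zs_def)
      qed
      then have "block L n y \<in> blocks L n (n + 2 * k)" using yH by (auto simp: blocks_def)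
      moreover have "block L n y \<notin> blocks L n (n + k)"
      proof
        assume "block L n y \<in> blocks L n (n + k)"
        then have "y \<in> Zs L (n+k)" using blocksZ yb by blast
        then show False using D_Z[OF e(4)] e(3) by blast
      qed
      ultimately have "block L n y \<in> B" by (simp add: B_def)
      then have "\<not> \<omega> {x, y}" using w b1 yb top[OF e(2-4)] by (auto simp: not_conn_def)
      then show ?thesis using e by simp
    qed
    moreover have "\<omega> \<in> space (PiM (edges L) Mf)" using w by (simp add: not_conn_def perc_eq)
    ultimately show "\<omega> \<in> P" by (simp add: P_def)
  qed
  define S where "S = (\<Sum>e\<in>E. J (edge_len L e))"
  have emP: "emeasure (PiM (edges L) Mf) P = (\<Prod>e\<in>E. emeasure (Mf e) {False})"
    unfolding P_def by (rule P.emeasure_PiM_Collect) (use E_sub finE in \<open>auto simp: Mf_def\<close>)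
  also have "\<dots> = (\<Prod>e\<in>E. ennreal (exp (- J (edge_len L e))))"
  proof (rule prod.cong)
    fix e assume "e \<in> E"
    then show "emeasure (Mf e) {False} = ennreal (exp (- J (edge_len L e)))"
      using Jnn[of e] by (simp add: Mf_def emeasure_pmf_single)
  qed simp
  also have "\<dots> = ennreal (exp (- S))"
    by (simp add: prod_ennreal exp_sum[OF finE, symmetric] S_def sum_negf)
  finally have emP': "emeasure (PiM (edges L) Mf) P = ennreal (exp (- S))" .
  have PS: "P \<in> sets (PiM (edges L) Mf)"
  proof (rule ccontr)
    assume "P \<notin> sets (PiM (edges L) Mf)"
    then have "emeasure (PiM (edges L) Mf) P = 0" by (rule emeasure_notin_sets)
    with emP' show False by simp
  qed
  have mP: "measure (PiM (edges L) Mf) P = exp (- S)"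
    using emP' by (simp add: measure_def)
  have step1: "measure (perc L J) (not_conn L J A B) \<le> exp (- S)"
  proof (cases "not_conn L J A B \<in> sets (PiM (edges L) Mf)")
    case True
    then show ?thesis using P.finite_measure_mono[OF sub[unfolded perc_eq] PS] mP perc_eq by simp
  next
    case False
    then show ?thesis using perc_eq by (simp add: measure_notin_sets)
  qed
  have cardUA: "card UA = card A * L ^ n"
  proof -
    have "card (\<Union>A) = sum card A"
    proof (rule card_Union_disjoint)
      show "pairwise disjnt A"
      proof (rule pairwiseI)
        fix b1 b2 assume b: "b1 \<in> A" "b2 \<in> A" "b1 \<noteq> b2"
        obtain x1 where x1: "x1 \<in> HL L" "b1 = block L n x1" using b A by (auto simp: blocks_def)
        obtain x2 where x2: "x2 \<in> HL L" "b2 = block L n x2" using b A by (auto simp: blocks_def)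
        show "disjnt b1 b2"
        proof (rule ccontr)
          assume "\<not> disjnt b1 b2"
          then obtain z where "z \<in> b1" "z \<in> b2" by (auto simp: disjnt_def)
          then have "\<forall>i>n. x1 i = x2 i" using block_char[OF L x1(1)] block_char[OF L x2(1)] x1 x2 by auto
          then have "b1 = b2" using x1 x2 block_char[OF L x1(1)] block_char[OF L x2(1)] by auto
          with b show False by simp
        qed
      qed
      show "finite b" if "b \<in> A" for b
        using that A card_block[OF L] by (auto simp: blocks_def)
    qed
    also have "sum card A = sum (\<lambda>_. L ^ n) A"
      by (rule sum.cong) (use A card_block[OF L] in \<open>auto simp: blocks_def\<close>)
    finally show ?thesis by (simp add: UA_def)
  qed
  have inj: "inj_on (\<lambda>(x,y). {x,y}) (UA \<times> UB)"
    unfolding inj_on_def using UA_Z UB_Z by (auto simp: doubleton_eq_iff)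
  have S_eq: "S = (\<Sum>x\<in>UA. \<Sum>y\<in>UB. J (hdist L x y))"
  proof -
    have "S = (\<Sum>p\<in>UA\<times>UB. J (edge_len L ((\<lambda>(x,y). {x,y}) p)))"
      unfolding S_def E_def by (subst sum.reindex[OF inj]) (simp add: comp_def)
    also have "\<dots> = (\<Sum>p\<in>UA\<times>UB. J (hdist L (fst p) (snd p)))"
    proof (rule sum.cong)
      fix p assume "p \<in> UA \<times> UB"
      then obtain x y where p: "p = (x, y)" "x \<in> UA" "y \<in> UB" by auto
      then have "x \<noteq> y" using UA_Z UB_Z by auto
      then show "J (edge_len L ((\<lambda>(x,y). {x,y}) p)) = J (hdist L (fst p) (snd p))"
        by (simp add: edge_len_eq p)
    qed simp
    also have "\<dots> = (\<Sum>x\<in>UA. \<Sum>y\<in>UB. J (hdist L x y))"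
      by (simp add: sum.cartesian_product case_prod_beta')
    finally show ?thesis .
  qed
  define c where "c = (a + \<delta>) * ln (real n) * (1 / real L ^ (n+k) - 1 / real L ^ (n+k+k))"
  have finD: "finite (D j)" for j
    using card_Zs[OF L] by (simp add: D_def)
  have Ddisj: "D i \<inter> D j = {}" if "i < j" for i j
  proof -
    have "Zs L i \<subseteq> Zs L (j - 1)" using that by (intro Zs_mono) simp
    then show ?thesis by (auto simp: D_def)
  qed
  have cardD: "real (card (D j)) = real L ^ j - real L ^ (j - 1)" for j
  proof -
    have "Zs L (j - 1) \<subseteq> Zs L j" by (rule Zs_mono) simp
    then have "card (D j) = L ^ j - L ^ (j - 1)"
      unfolding D_def using card_Zs[OF L] by (simp add: card_Diff_subset)
    moreover have "L ^ (j - 1) \<le> L ^ j" using L by (intro power_increasing) auto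
    ultimately show ?thesis by (simp add: of_nat_diff)
  qed
  have inner: "(\<Sum>y\<in>UB. J (hdist L x y)) \<ge> c" if x: "x \<in> UA" for x
  proof -
    have "(\<Sum>y\<in>UB. J (hdist L x y)) = (\<Sum>j\<in>K. \<Sum>y\<in>D j. J (hdist L x y))"
      unfolding UB_def
    proof (rule sum.UNION_disjoint)
      show "finite K" by (simp add: K_def)
      show "\<forall>i\<in>K. finite (D i)" using finD by simp
      show "\<forall>i\<in>K. \<forall>j\<in>K. i \<noteq> j \<longrightarrow> D i \<inter> D j = {}"
        using Ddisj by (metis Int_commute linorder_neqE_nat)
    qed
    also have "\<dots> = (\<Sum>j\<in>K. real (card (D j)) * J (real L ^ j))"
    proof (rule sum.cong)
      fix j assume j: "j \<in> K"
      have "(\<Sum>y\<in>D j. J (hdist L x y)) = (\<Sum>y\<in>D j. J (real L ^ j))"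
        by (rule sum.cong) (use top[OF x _ j] in auto)
      then show "(\<Sum>y\<in>D j. J (hdist L x y)) = real (card (D j)) * J (real L ^ j)" by simp
    qed simp
    also have "\<dots> \<ge> (\<Sum>j\<in>K. (a + \<delta>) * ln (real n) * ((real L - 1) / real L ^ j))"
    proof (rule sum_mono)
      fix j assume j: "j \<in> K"
      then obtain i where i: "j = Suc i" by (cases j) (auto simp: K_def)
      have jn: "j \<ge> n" using j by (auto simp: K_def)
      have lnj: "ln (real n) \<le> ln (real j)" using jn n by simp
      have pos: "0 \<le> (a + \<delta>) * real L * real L powr (- 2 * real j)" using a \<delta> by simp
      have "(a + \<delta>) * real L * ln (real n) * real L powr (- 2 * real j)
          \<le> (a + \<delta>) * real L * ln (real j) * real L powr (- 2 * real j)"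
        using mult_left_mono[OF lnj pos] by (simp add: algebra_simps)
      also have "\<dots> \<le> J (real L ^ j)" using J_lower[OF jn] .
      finally have Jj: "(a + \<delta>) * ln (real n) * (real L * real L powr (- 2 * real j)) \<le> J (real L ^ j)"
        by (simp add: algebra_simps)
      have cnn: "0 \<le> real (card (D j))" by simp
      have "(a + \<delta>) * ln (real n) * ((real L - 1) / real L ^ j)
          = real (card (D j)) * ((a + \<delta>) * ln (real n) * (real L * real L powr (- 2 * real j)))"
      proof -
        have Lp: "real L > 0" using L by simp
        have c1: "real (card (D j)) = real L ^ Suc i - real L ^ i" using cardD[of j] i by simp
        have "(real L ^ Suc i - real L ^ i) * (real L * real L powr (- 2 * real (Suc i))) = (real L - 1) / real L ^ Suc i"
          using ident[OF Lp, of i] by (simp only: mult.assoc)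
        then have id: "real (card (D j)) * (real L * real L powr (- 2 * real j)) = (real L - 1) / real L ^ j"
          unfolding c1 unfolding i .
        have "(a + \<delta>) * ln (real n) * ((real L - 1) / real L ^ j)
           = (a + \<delta>) * ln (real n) * (real (card (D j)) * (real L * real L powr (- 2 * real j)))"
          by (simp only: id)
        also have "\<dots> = real (card (D j)) * ((a + \<delta>) * ln (real n) * (real L * real L powr (- 2 * real j)))"
          by (simp only: ac_simps)
        finally show ?thesis .
      qed
      also have "\<dots> \<le> real (card (D j)) * J (real L ^ j)"
        by (rule mult_left_mono[OF Jj cnn])
      finally show "(a + \<delta>) * ln (real n) * ((real L - 1) / real L ^ j) \<le> real (card (D j)) * J (real L ^ j)" .
    qed
    also have "(\<Sum>j\<in>K. (a + \<delta>) * ln (real n) * ((real L - 1) / real L ^ j)) = c"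
      unfolding c_def K_def sum_distrib_left[symmetric] geo_sum[OF L1] ..
    finally show ?thesis .
  qed
  have gam: "\<gamma> \<ge> 0"
  proof -
    have "0 \<le> \<gamma> * real L ^ k" using card by (metis of_nat_0_le_iff)
    moreover have "real L ^ k > 0" using L by simp
    ultimately show ?thesis by (simp add: zero_le_mult_iff)
  qed
  have "S \<ge> real (card UA) * c"
    using sum_mono[of UA "\<lambda>_. c", OF inner] S_eq by simp
  also have "real (card UA) * c = \<gamma> * ln (real n) * ((a + \<delta>) * (1 - real L powr (- real k)))"
  proof -
    have pk: "real L powr (- real k) = 1 / real L ^ k"
      using L by (simp add: powr_minus powr_realpow divide_inverse)
    show ?thesis unfolding cardUA c_def pk using card L
      by (simp add: field_simps power_add)
  qed
  also have "\<dots> \<ge> \<gamma> * ln (real n) * a"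
    by (rule mult_left_mono[OF k]) (use gam n in simp)
  finally have Sge: "S \<ge> \<gamma> * ln (real n) * a" .
  have "exp (- S) \<le> exp (- (\<gamma> * ln (real n) * a))" using Sge by simp
  also have "\<dots> = real n powr (- \<gamma> * a)" using n by (simp add: powr_def algebra_simps)
  finally show ?thesis using step1 by (simp add: B_def)
qed

end
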